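(* Let $q\ge2$, $n\ge1$, $X=\{0,\ldots,q-1\}$, and let $\mathcal{L}=\{L_1,\ldots,L_k\}$ be a partition of $X^n$ with respect to which the Insect Markov chain on $X^n$ is lumpable. Then there exists a subgroup $K\le Aut(T_{q,n})$ such that the orbits of $K$ on $X^n$ are exactly the parts $L_1,\ldots,L_k$.
   Context: $X^n$ is identified with the set of leaves (boundary) of the rooted $q$-ary tree $T_{q,n}$ of depth $n$, whose vertices are the words of length $\le n$ over $X$. $Aut(T_{q,n})$ (the iterated wreath product $Sym(q)\wr\cdots\wr Sym(q)$, $n$ factors) is the group of permutations $g$ of $X^n$ such that for all $x,y\in X^n$ and $m\le n$, $x_1\cdots x_m=y_1\cdots y_m$ iff $(gx)_1\cdots(gx)_m=(gy)_1\cdots(gy)_m$. For $x,y\in X^n$, $d(x,y)=n-\max\{m: x_1\cdots x_m=y_1\cdots y_m\}$. Set $\alpha_j=\frac{q^j-1}{q^{j+1}-1}$ for $1\le j\le n-1$, $\alpha_n=0$. The Insect Markov chain on $X^n$ has transition probabilities $p(x,y)=q^{-1}(1-\alpha_1)+\sum_{i=2}^nq^{-i}\alpha_1\cdots\alpha_{i-1}(1-\alpha_i)$ if $d(x,y)\in\{0,1\}$ and $p(x,y)=\sum_{i=j}^nq^{-i}\alpha_1\cdots\alpha_{i-1}(1-\alpha_i)$ if $d(x,y)=j>1$. A chain is lumpable with respect to a partition if for all parts $L,L'$ the map $x\mapsto\sum_{y\in L'}p(x,y)$ is constant on $L$. *)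

theory Defs
  imports Complex_Main "HOL-Algebra.Bij" "HOL-Library.Disjoint_Sets"
begin

definition words :: "nat \<Rightarrow> nat \<Rightarrow> nat list set" where
  "words q n = {x. length x = n \<and> set x \<subseteq> {0..<q}}"

(* Aut(T_{q,n}): permutations of X^n preserving common-prefix relations;
   permutations are represented extensionally (identity outside X^n), as in Bij *)
definition tree_aut :: "nat \<Rightarrow> nat \<Rightarrow> (nat list \<Rightarrow> nat list) set" where
  "tree_aut q n = {g \<in> Bij (words q n).
     \<forall>x\<in>words q n. \<forall>y\<in>words q n. \<forall>m\<le>n.
       (take m x = take m y \<longleftrightarrow> take m (g x) = take m (g y))}"

definition tree_aut_group :: "nat \<Rightarrow> nat \<Rightarrow> (nat list \<Rightarrow> nat list) monoid" where
  "tree_aut_group q n = (BijGroup (words q n)) \<lparr>carrier := tree_aut q n\<rparr>"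

definition tree_dist :: "nat \<Rightarrow> nat list \<Rightarrow> nat list \<Rightarrow> nat" where
  "tree_dist n x y = n - (GREATEST m. m \<le> n \<and> take m x = take m y)"

definition alpha :: "nat \<Rightarrow> nat \<Rightarrow> nat \<Rightarrow> real" where
  "alpha q n j = (if j < n then (real q ^ j - 1) / (real q ^ (j + 1) - 1) else 0)"

definition insect_term :: "nat \<Rightarrow> nat \<Rightarrow> nat \<Rightarrow> real" where
  "insect_term q n i = (1 / real q ^ i) * (\<Prod>j\<in>{1..<i}. alpha q n j) * (1 - alpha q n i)"

definition insect_p :: "nat \<Rightarrow> nat \<Rightarrow> nat list \<Rightarrow> nat list \<Rightarrow> real" where
  "insect_p q n x y =
     (if tree_dist n x y \<in> {0, 1}
      then (1 / real q) * (1 - alpha q n 1) + (\<Sum>i=2..n. insect_term q n i)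
      else (\<Sum>i=tree_dist n x y..n. insect_term q n i))"

definition lumpable :: "nat \<Rightarrow> nat \<Rightarrow> nat list set set \<Rightarrow> bool" where
  "lumpable q n P \<longleftrightarrow>
     (\<forall>L\<in>P. \<forall>L'\<in>P. \<forall>x\<in>L. \<forall>x'\<in>L.
        (\<Sum>y\<in>L'. insect_p q n x y) = (\<Sum>y\<in>L'. insect_p q n x' y))"

definition orbits :: "(nat list \<Rightarrow> nat list) set \<Rightarrow> nat list set \<Rightarrow> nat list set set" where
  "orbits K S = {{g x | g. g \<in> K} | x. x \<in> S}"

end

theory Submission
  imports Defs
begin

lemma bij_Bij_mem: "g \<in> Bij S \<Longrightarrow> x \<in> S \<Longrightarrow> g x \<in> S"
  using Bij_imp_funcset by blast

lemma Bij_inv_f: "g \<in> Bij S \<Longrightarrow> x \<in> S \<Longrightarrow> g (inv_into S g x) = x"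
  by (metis Bij_def IntD2 bij_betw_def f_inv_into_f mem_Collect_eq)

lemma tree_aut_sub: "subgroup (tree_aut q n) (BijGroup (words q n))"
proof (rule group.subgroupI[OF group_BijGroup])
  let ?W = "words q n"
  show "tree_aut q n \<subseteq> carrier (BijGroup ?W)"
    by (auto simp: tree_aut_def BijGroup_def)
  have "(\<lambda>x\<in>?W. x) \<in> tree_aut q n"
    by (auto simp: tree_aut_def id_Bij)
  then show "tree_aut q n \<noteq> {}" by blast
next
  let ?W = "words q n"
  fix a assume a: "a \<in> tree_aut q n"
  then have aB: "a \<in> Bij ?W" by (simp add: tree_aut_def)
  have "(\<lambda>x\<in>?W. inv_into ?W a x) \<in> tree_aut q n"
    unfolding tree_aut_def
  proof (intro CollectI conjI ballI allI impI)
    show "(\<lambda>x\<in>?W. inv_into ?W a x) \<in> Bij ?W" using aB by (rule restrict_inv_into_Bij)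
    fix x y m assume x: "x \<in> ?W" and y: "y \<in> ?W" and m: "m \<le> n"
    have "take m (inv_into ?W a x) = take m (inv_into ?W a y) \<longleftrightarrow>
          take m (a (inv_into ?W a x)) = take m (a (inv_into ?W a y))"
      using a x y m Bij_inv_into_mem[OF aB] unfolding tree_aut_def by blast
    then show "take m x = take m y \<longleftrightarrow>
      take m ((\<lambda>x\<in>?W. inv_into ?W a x) x) = take m ((\<lambda>x\<in>?W. inv_into ?W a x) y)"
      using x y Bij_inv_f[OF aB] by simp
  qed
  then show "inv\<^bsub>BijGroup ?W\<^esub> a \<in> tree_aut q n" using inv_BijGroup[OF aB] by simp
next
  let ?W = "words q n"
  fix a b assume a: "a \<in> tree_aut q n" and b: "b \<in> tree_aut q n"
  then have aB: "a \<in> Bij ?W" and bB: "b \<in> Bij ?W" by (auto simp: tree_aut_def)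
  have "compose ?W a b \<in> tree_aut q n"
    unfolding tree_aut_def
  proof (intro CollectI conjI ballI allI impI)
    show "compose ?W a b \<in> Bij ?W" using aB bB by (rule compose_Bij)
    fix x y m assume x: "x \<in> ?W" and y: "y \<in> ?W" and m: "m \<le> n"
    have bx: "b x \<in> ?W" "b y \<in> ?W" using x y bij_Bij_mem[OF bB] by auto
    have e1: "take m x = take m y \<longleftrightarrow> take m (b x) = take m (b y)"
      using b x y m unfolding tree_aut_def by blast
    have e2: "take m (b x) = take m (b y) \<longleftrightarrow> take m (a (b x)) = take m (a (b y))"
      using a bx m unfolding tree_aut_def by blast
    show "take m x = take m y \<longleftrightarrow> take m (compose ?W a b x) = take m (compose ?W a b y)"
      using e1 e2 x y by (simp add: compose_def)
  qed
  then show "a \<otimes>\<^bsub>BijGroup ?W\<^esub> b \<in> tree_aut q n"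
    using aB bB by (simp add: BijGroup_def)
qed

definition part_aut :: "nat list set \<Rightarrow> nat list set set \<Rightarrow> (nat list \<Rightarrow> nat list) set" where
  "part_aut W P = {g \<in> Bij W. \<forall>x\<in>W. \<forall>L\<in>P. x \<in> L \<longleftrightarrow> g x \<in> L}"

lemma part_aut_sub: "subgroup (part_aut W P) (BijGroup W)"
proof (rule group.subgroupI[OF group_BijGroup])
  show "part_aut W P \<subseteq> carrier (BijGroup W)"
    by (auto simp: part_aut_def BijGroup_def)
  have "(\<lambda>x\<in>W. x) \<in> part_aut W P"
    by (auto simp: part_aut_def id_Bij)
  then show "part_aut W P \<noteq> {}" by blast
next
  fix a assume a: "a \<in> part_aut W P"
  then have aB: "a \<in> Bij W" by (simp add: part_aut_def)
  have "(\<lambda>x\<in>W. inv_into W a x) \<in> part_aut W P"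
    unfolding part_aut_def
  proof (intro CollectI conjI ballI allI impI)
    show "(\<lambda>x\<in>W. inv_into W a x) \<in> Bij W" using aB by (rule restrict_inv_into_Bij)
    fix x L assume x: "x \<in> W" and L: "L \<in> P"
    have "inv_into W a x \<in> L \<longleftrightarrow> a (inv_into W a x) \<in> L"
      using a x L Bij_inv_into_mem[OF aB] unfolding part_aut_def by blast
    then show "x \<in> L \<longleftrightarrow> (\<lambda>x\<in>W. inv_into W a x) x \<in> L"
      using x Bij_inv_f[OF aB] by simp
  qed
  then show "inv\<^bsub>BijGroup W\<^esub> a \<in> part_aut W P" using inv_BijGroup[OF aB] by simp
next
  fix a b assume a: "a \<in> part_aut W P" and b: "b \<in> part_aut W P"
  then have aB: "a \<in> Bij W" and bB: "b \<in> Bij W" by (auto simp: part_aut_def)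
  have "compose W a b \<in> part_aut W P"
    unfolding part_aut_def
  proof (intro CollectI conjI ballI allI impI)
    show "compose W a b \<in> Bij W" using aB bB by (rule compose_Bij)
    fix x L assume x: "x \<in> W" and L: "L \<in> P"
    show "x \<in> L \<longleftrightarrow> compose W a b x \<in> L"
    proof -
      have bx: "b x \<in> W" using x bij_Bij_mem[OF bB] by auto
      have e1: "x \<in> L \<longleftrightarrow> b x \<in> L" using b x L unfolding part_aut_def by blast
      have e2: "b x \<in> L \<longleftrightarrow> a (b x) \<in> L" using a bx L unfolding part_aut_def by blast
      show ?thesis using e1 e2 x by (simp add: compose_def)
    qed
  qed
  then show "a \<otimes>\<^bsub>BijGroup W\<^esub> b \<in> part_aut W P"
    using aB bB by (simp add: BijGroup_def)
qed

lemma K_sub: "subgroup (tree_aut q n \<inter> part_aut (words q n) P) (tree_aut_group q n)"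
proof -
  have "subgroup (tree_aut q n \<inter> part_aut (words q n) P) (BijGroup (words q n))"
    by (rule group.subgroups_Inter_pair[OF group_BijGroup tree_aut_sub part_aut_sub])
  then show ?thesis unfolding tree_aut_group_def
    by (rule group.subgroup_incl[OF group_BijGroup _ tree_aut_sub]) simp
qed


lemma words_finite: "finite (words q n)"
proof -
  have "words q n = {xs. set xs \<subseteq> {0..<q} \<and> length xs = n}" by (auto simp: words_def)
  then show ?thesis by (simp add: finite_lists_length_eq)
qed

lemma card_words: "card (words q n) = q ^ n"
proof -
  have "words q n = {xs. set xs \<subseteq> {0..<q} \<and> length xs = n}" by (auto simp: words_def)
  then show ?thesis by (simp add: card_lists_length_eq)
qed

lemma words_len: "x \<in> words q n \<Longrightarrow> length x = n" by (simp add: words_def)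

lemma card_blk:
  assumes x: "x \<in> words q n" and m: "m \<le> n"
  shows "card {y \<in> words q n. take m y = take m x} = q ^ (n - m)"
proof -
  let ?u = "take m x"
  have lu: "length ?u = m" using x m by (simp add: words_def)
  have su: "set ?u \<subseteq> {0..<q}" using x set_take_subset[of m x] by (auto simp: words_def)
  have "{y \<in> words q n. take m y = ?u} = (\<lambda>v. ?u @ v) ` words q (n - m)"
  proof (intro equalityI subsetI)
    fix y assume "y \<in> {y \<in> words q n. take m y = ?u}"
    then have y: "y \<in> words q n" "take m y = ?u" by auto
    have "y = ?u @ drop m y" using y(2) by (metis append_take_drop_id)
    moreover have "drop m y \<in> words q (n - m)"
      using y(1) by (auto simp: words_def dest: in_set_dropD)
    ultimately show "y \<in> (\<lambda>v. ?u @ v) ` words q (n - m)" by blast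
  next
    fix y assume "y \<in> (\<lambda>v. ?u @ v) ` words q (n - m)"
    then obtain v where v: "v \<in> words q (n - m)" "y = ?u @ v" by blast
    then show "y \<in> {y \<in> words q n. take m y = ?u}"
      using lu su m by (auto simp: words_def)
  qed
  moreover have "inj_on (\<lambda>v. ?u @ v) (words q (n - m))" by (simp add: inj_on_def)
  ultimately show ?thesis by (simp add: card_image card_words)
qed

lemma take_eq_mono: "take b y = take b z \<Longrightarrow> a \<le> b \<Longrightarrow> take a y = take a z"
  by (metis min.absorb1 take_take)

locale insect =
  fixes q n :: nat and P :: "nat list set set"
  assumes q2: "q \<ge> 2" and n1: "n \<ge> 1"
    and part: "partition_on (words q n) P"
    and lump: "lumpable q n P"
begin

abbreviation W where "W \<equiv> words q n"

definition blk :: "nat \<Rightarrow> nat list \<Rightarrow> nat list set" where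
  "blk m x = {y \<in> W. take m y = take m x}"

definition Eop :: "nat \<Rightarrow> (nat list \<Rightarrow> real) \<Rightarrow> nat list \<Rightarrow> real" where
  "Eop m g x = (\<Sum>y\<in>blk m x. g y) / real q ^ (n - m)"

lemma blk_finite: "finite (blk m x)"
  using words_finite by (simp add: blk_def)

lemma card_blk': "x \<in> W \<Longrightarrow> m \<le> n \<Longrightarrow> real (card (blk m x)) = real q ^ (n - m)"
  using card_blk by (simp add: blk_def)

lemma qpos: "real q ^ k > 0" using q2 by simp

lemma EE:
  assumes x: "x \<in> W" and a: "a \<le> n" and b: "b \<le> n"
  shows "Eop a (Eop b g) x = Eop (min a b) g x"
proof (cases "a \<le> b")
  case True
  have "(\<Sum>z\<in>blk a x. (\<Sum>y\<in>blk b z. g y)) =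
        (\<Sum>z\<in>blk a x. (\<Sum>y\<in>{y\<in>W. take b z = take b y}. g y))"
    unfolding blk_def by (intro sum.cong refl Collect_cong) auto
  also have "\<dots> = (\<Sum>y\<in>W. (\<Sum>z\<in>{z\<in>blk a x. take b z = take b y}. g y))"
    by (rule sum.swap_restrict) (auto simp: blk_finite words_finite)
  also have "\<dots> = (\<Sum>y\<in>W. (if take a y = take a x then real q ^ (n - b) * g y else 0))"
  proof (rule sum.cong[OF refl])
    fix y assume y: "y \<in> W"
    show "(\<Sum>z\<in>{z\<in>blk a x. take b z = take b y}. g y) =
          (if take a y = take a x then real q ^ (n - b) * g y else 0)"
    proof (cases "take a y = take a x")
      case T: True
      have "{z\<in>blk a x. take b z = take b y} = blk b y"
        using T \<open>a \<le> b\<close> by (auto simp: blk_def dest: take_eq_mono)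
      then show ?thesis using T card_blk'[OF y b] by simp
    next
      case F: False
      have e: "{z\<in>blk a x. take b z = take b y} = {}"
        using F \<open>a \<le> b\<close> by (auto simp: blk_def dest: take_eq_mono)
      show ?thesis by (simp only: e F sum.empty if_False)
    qed
  qed
  also have "\<dots> = real q ^ (n - b) * (\<Sum>y\<in>blk a x. g y)"
    by (simp add: sum.If_cases words_finite blk_def sum_distrib_left Int_def conj_commute)
  finally have e: "(\<Sum>z\<in>blk a x. (\<Sum>y\<in>blk b z. g y)) = real q ^ (n - b) * (\<Sum>y\<in>blk a x. g y)" .
  have "Eop a (Eop b g) x = (\<Sum>z\<in>blk a x. (\<Sum>y\<in>blk b z. g y)) / real q ^ (n - b) / real q ^ (n - a)"
    by (simp add: Eop_def sum_divide_distrib)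
  also have "\<dots> = (\<Sum>y\<in>blk a x. g y) / real q ^ (n - a)"
    using e qpos[of "n-b"] by (simp only: nonzero_mult_div_cancel_left less_irrefl)
  also have "\<dots> = Eop a g x" by (simp only: Eop_def)
  finally show ?thesis using True by simp
next
  case False
  have "(\<Sum>z\<in>blk a x. (\<Sum>y\<in>blk b z. g y)) = (\<Sum>z\<in>blk a x. (\<Sum>y\<in>blk b x. g y))"
  proof (rule sum.cong[OF refl])
    fix z assume "z \<in> blk a x"
    then have "take a z = take a x" by (simp add: blk_def)
    then have "take b z = take b x" using False take_eq_mono[of a z x b] by simp
    then show "(\<Sum>y\<in>blk b z. g y) = (\<Sum>y\<in>blk b x. g y)" by (simp add: blk_def)
  qed
  also have "\<dots> = real q ^ (n - a) * (\<Sum>y\<in>blk b x. g y)" using card_blk'[OF x a] by simp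
  finally have e: "(\<Sum>z\<in>blk a x. (\<Sum>y\<in>blk b z. g y)) = real q ^ (n - a) * (\<Sum>y\<in>blk b x. g y)" .
  have "Eop a (Eop b g) x = (\<Sum>z\<in>blk a x. (\<Sum>y\<in>blk b z. g y)) / real q ^ (n - b) / real q ^ (n - a)"
    by (simp add: Eop_def sum_divide_distrib)
  also have "\<dots> = (\<Sum>z\<in>blk a x. (\<Sum>y\<in>blk b z. g y)) / real q ^ (n - a) / real q ^ (n - b)"
    by (simp only: divide_divide_eq_left mult.commute)
  also have "\<dots> = (\<Sum>y\<in>blk b x. g y) / real q ^ (n - b)"
    using e qpos[of "n-a"] by (simp only: nonzero_mult_div_cancel_left less_irrefl)
  also have "\<dots> = Eop b g x" by (simp only: Eop_def)
  finally show ?thesis using False by simp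
qed

lemma Eop_diff: "Eop m (\<lambda>y. g y - h y) x = Eop m g x - Eop m h x"
  by (simp add: Eop_def sum_subtractf diff_divide_distrib)

lemma Eop_cong: "x \<in> W \<Longrightarrow> (\<And>y. y \<in> W \<Longrightarrow> g y = h y) \<Longrightarrow> Eop m g x = Eop m h x"
  by (simp add: Eop_def blk_def)

lemma Eop_n: "x \<in> W \<Longrightarrow> Eop n g x = g x"
proof -
  assume x: "x \<in> W"
  have "blk n x = {x}" using x by (auto simp: blk_def words_def)
  then show ?thesis by (simp add: Eop_def)
qed

end

context insect begin

lemma qnz[simp]: "q \<noteq> 0" using q2 by simp

lemma take_iff_G:
  assumes x: "x \<in> W" and y: "y \<in> W" and j: "j \<le> n"
  shows "take j x = take j y \<longleftrightarrow> j \<le> (GREATEST m. m \<le> n \<and> take m x = take m y)"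
proof -
  let ?Q = "\<lambda>m. m \<le> n \<and> take m x = take m y"
  have Q0: "?Q 0" by simp
  have bnd: "\<And>m. ?Q m \<Longrightarrow> m \<le> n" by simp
  have G: "?Q (Greatest ?Q)" by (rule GreatestI_nat[of ?Q 0 n]) auto
  show ?thesis
  proof
    assume "take j x = take j y"
    then have "?Q j" using j by simp
    then show "j \<le> Greatest ?Q" by (rule Greatest_le_nat[of ?Q j n]) auto
  next
    assume "j \<le> Greatest ?Q"
    then show "take j x = take j y" using G take_eq_mono by blast
  qed
qed

lemma dist_le:
  assumes x: "x \<in> W" and y: "y \<in> W" and i: "i \<le> n"
  shows "tree_dist n x y \<le> i \<longleftrightarrow> take (n - i) x = take (n - i) y"
proof -
  let ?G = "GREATEST m. m \<le> n \<and> take m x = take m y"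
  have "?G \<le> n"
  proof -
    have "(\<lambda>m. m \<le> n \<and> take m x = take m y) ?G"
      by (rule GreatestI_nat[of _ 0 n]) auto
    then show ?thesis by simp
  qed
  then have "tree_dist n x y \<le> i \<longleftrightarrow> n - i \<le> ?G" unfolding tree_dist_def by arith
  also have "\<dots> \<longleftrightarrow> take (n - i) x = take (n - i) y" using take_iff_G[OF x y, of "n-i"] by simp
  finally show ?thesis .
qed

lemma dist_bound: "tree_dist n x y \<le> n" by (simp add: tree_dist_def)

lemma sum_ind: "(\<Sum>i\<in>{1..n}. insect_term q n i * (if d \<le> i then 1 else 0)) =
    (\<Sum>i\<in>{max 1 d..n}. insect_term q n i)"
proof -
  have "(\<Sum>i\<in>{1..n}. insect_term q n i * (if d \<le> i then 1 else 0)) =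
        (\<Sum>i\<in>{1..n}. if d \<le> i then insect_term q n i else 0)"
    by (rule sum.cong) auto
  also have "\<dots> = (\<Sum>i\<in>{i\<in>{1..n}. d \<le> i}. insect_term q n i)"
    by (rule sum.inter_filter[symmetric]) simp
  also have "{i\<in>{1..n}. d \<le> i} = {max 1 d..n}" by auto
  finally show ?thesis .
qed

lemma p_eq:
  assumes x: "x \<in> W" and y: "y \<in> W"
  shows "insect_p q n x y =
    (\<Sum>i\<in>{1..n}. insect_term q n i * (if take (n - i) x = take (n - i) y then 1 else 0))"
proof -
  let ?d = "tree_dist n x y"
  have "(\<Sum>i\<in>{1..n}. insect_term q n i * (if take (n - i) x = take (n - i) y then 1 else 0)) =
        (\<Sum>i\<in>{1..n}. insect_term q n i * (if ?d \<le> i then 1 else 0))"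
    by (rule sum.cong[OF refl]) (simp add: dist_le[OF x y])
  also have "\<dots> = (\<Sum>i\<in>{max 1 ?d..n}. insect_term q n i)" by (rule sum_ind)
  finally have e: "(\<Sum>i\<in>{1..n}. insect_term q n i * (if take (n - i) x = take (n - i) y then 1 else 0)) =
        (\<Sum>i\<in>{max 1 ?d..n}. insect_term q n i)" .
  show ?thesis
  proof (cases "?d \<in> {0, 1}")
    case True
    then have m: "max 1 ?d = 1" by auto
    have t1: "insect_term q n 1 = 1 / real q * (1 - alpha q n 1)"
      by (simp add: insect_term_def)
    have "(\<Sum>i\<in>{1..n}. insect_term q n i) = insect_term q n 1 + (\<Sum>i\<in>{2..n}. insect_term q n i)"
      using n1 by (simp add: sum.atLeast_Suc_atMost numeral_2_eq_2)
    then show ?thesis using True e m t1 by (simp add: insect_p_def)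
  next
    case False
    then have m: "max 1 ?d = ?d" by auto
    then show ?thesis using False e by (simp add: insect_p_def)
  qed
qed

definition Pop :: "(nat list \<Rightarrow> real) \<Rightarrow> nat list \<Rightarrow> real" where
  "Pop g x = (\<Sum>y\<in>W. insect_p q n x y * g y)"

definition bb :: "nat \<Rightarrow> real" where
  "bb m = insect_term q n (n - m) * real q ^ (n - m)"

lemma Pop_E:
  assumes x: "x \<in> W"
  shows "Pop g x = (\<Sum>m<n. bb m * Eop m g x)"
proof -
  have "Pop g x = (\<Sum>y\<in>W. \<Sum>i\<in>{1..n}. insect_term q n i *
          (if take (n - i) x = take (n - i) y then g y else 0))"
    unfolding Pop_def
  proof (rule sum.cong[OF refl])
    fix y assume y: "y \<in> W"
    show "insect_p q n x y * g y = (\<Sum>i\<in>{1..n}. insect_term q n i *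
          (if take (n - i) x = take (n - i) y then g y else 0))"
      unfolding p_eq[OF x y] sum_distrib_right by (intro sum.cong refl) simp
  qed
  also have "\<dots> = (\<Sum>i\<in>{1..n}. \<Sum>y\<in>W. insect_term q n i *
          (if take (n - i) x = take (n - i) y then g y else 0))"
    by (rule sum.swap)
  also have "\<dots> = (\<Sum>i\<in>{1..n}. insect_term q n i * (\<Sum>y\<in>blk (n - i) x. g y))"
  proof (rule sum.cong[OF refl])
    fix i
    have "(\<Sum>y\<in>blk (n - i) x. g y) = (\<Sum>y\<in>W. if take (n - i) x = take (n - i) y then g y else 0)"
      unfolding blk_def by (simp add: sum.inter_filter words_finite eq_commute)
    then show "(\<Sum>y\<in>W. insect_term q n i * (if take (n - i) x = take (n - i) y then g y else 0)) =
        insect_term q n i * (\<Sum>y\<in>blk (n - i) x. g y)"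
      by (simp add: sum_distrib_left)
  qed
  also have "\<dots> = (\<Sum>i\<in>{1..n}. bb (n - i) * Eop (n - i) g x)"
  proof (rule sum.cong[OF refl])
    fix i assume i: "i \<in> {1..n}"
    then have nn: "n - (n - i) = i" by auto
    show "insect_term q n i * (\<Sum>y\<in>blk (n - i) x. g y) = bb (n - i) * Eop (n - i) g x"
      unfolding bb_def Eop_def nn using qpos[of i] by simp
  qed
  also have "\<dots> = (\<Sum>m<n. bb m * Eop m g x)"
    by (rule sum.reindex_bij_witness[where i = "\<lambda>m. n - m" and j = "\<lambda>i. n - i"]) auto
  finally show ?thesis .
qed

lemma alpha_pos: "1 \<le> j \<Longrightarrow> j < n \<Longrightarrow> alpha q n j > 0"
proof -
  assume j: "1 \<le> j" "j < n"
  have q2': "real q \<ge> 2" using q2 by simp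
  have "real q ^ j \<ge> real q" using power_increasing[of 1 j "real q"] q2' j by simp
  then have a: "real q ^ j > 1" using q2' by linarith
  have "real q ^ (j+1) \<ge> real q" using power_increasing[of 1 "j+1" "real q"] q2' j by simp
  then have b: "real q ^ (j+1) > 1" using q2' by linarith
  show ?thesis using a b j by (simp add: alpha_def)
qed

lemma alpha_lt1: "alpha q n j < 1"
proof (cases "j < n")
  case True
  have "real q ^ j < real q ^ (j+1)" using q2 by (intro power_strict_increasing) auto
  moreover have "real q ^ j \<ge> 1" using q2 by simp
  ultimately show ?thesis using True by (simp add: alpha_def)
next
  case False then show ?thesis by (simp add: alpha_def)
qed

lemma term_pos: "1 \<le> i \<Longrightarrow> i \<le> n \<Longrightarrow> insect_term q n i > 0"
proof -
  assume i: "1 \<le> i" "i \<le> n"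
  have "(\<Prod>j\<in>{1..<i}. alpha q n j) > 0"
    by (rule prod_pos) (use i alpha_pos in auto)
  moreover have "1 - alpha q n i > 0" using alpha_lt1[of i] by simp
  moreover have "1 / real q ^ i > 0" using qpos by simp
  ultimately show ?thesis unfolding insect_term_def by simp
qed

lemma bb_pos: "m < n \<Longrightarrow> bb m > 0"
  unfolding bb_def using term_pos[of "n - m"] qpos[of "n-m"] by simp

end

context insect begin

definition wv :: "(nat list \<Rightarrow> real) \<Rightarrow> nat \<Rightarrow> nat list \<Rightarrow> real" where
  "wv f m x = (if m = 0 then Eop 0 f x else Eop m f x - Eop (m - 1) f x)"

lemma E_wv:
  assumes x: "x \<in> W" and k: "k \<le> n" and m: "m \<le> n"
  shows "Eop k (wv f m) x = (if m \<le> k then wv f m x else 0)"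
proof (cases "m = 0")
  case True
  then have "wv f m = Eop 0 f" by (simp add: wv_def fun_eq_iff)
  then show ?thesis using EE[OF x k, of 0 f] True by (simp add: wv_def)
next
  case False
  then have "wv f m = (\<lambda>y. Eop m f y - Eop (m - 1) f y)" by (simp add: wv_def fun_eq_iff)
  then have "Eop k (wv f m) x = Eop (min k m) f x - Eop (min k (m - 1)) f x"
    using EE[OF x k m, of f] EE[OF x k, of "m-1" f] m by (simp add: Eop_diff)
  then show ?thesis using False by (auto simp: wv_def min_def)
qed

definition lam :: "nat \<Rightarrow> real" where
  "lam m = (\<Sum>k\<in>{m..<n}. bb k)"

lemma Pop_wv:
  assumes x: "x \<in> W" and m: "m \<le> n"
  shows "Pop (wv f m) x = lam m * wv f m x"
proof -
  have "Pop (wv f m) x = (\<Sum>k<n. bb k * (if m \<le> k then wv f m x else 0))"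
    unfolding Pop_E[OF x] by (rule sum.cong[OF refl]) (simp add: E_wv[OF x _ m])
  also have "\<dots> = (\<Sum>k\<in>{k\<in>{..<n}. m \<le> k}. bb k * wv f m x)"
    unfolding sum.inter_filter[OF finite_lessThan] by (intro sum.cong refl) simp
  also have "{k\<in>{..<n}. m \<le> k} = {m..<n}" by auto
  finally show ?thesis by (simp add: lam_def sum_distrib_right)
qed

lemma sum_wv: "x \<in> W \<Longrightarrow> k \<le> n \<Longrightarrow> (\<Sum>m\<le>k. wv f m x) = Eop k f x"
  by (induction k) (auto simp: wv_def)

lemma sum_wv_n: "x \<in> W \<Longrightarrow> (\<Sum>m\<le>n. wv f m x) = f x"
  using sum_wv[of x n f] Eop_n by simp

definition cp :: "(nat list \<Rightarrow> real) \<Rightarrow> bool" where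
  "cp g \<longleftrightarrow> (\<forall>L\<in>P. \<forall>x\<in>L. \<forall>y\<in>L. g x = g y)"

lemma parts_sub: "L \<in> P \<Longrightarrow> L \<subseteq> W"
  using part by (auto simp: partition_on_def)

lemma part_unique: "L \<in> P \<Longrightarrow> L' \<in> P \<Longrightarrow> x \<in> L \<Longrightarrow> x \<in> L' \<Longrightarrow> L = L'"
proof (rule ccontr)
  assume a: "L \<in> P" "L' \<in> P" "x \<in> L" "x \<in> L'" "L \<noteq> L'"
  have "disjoint P" using part by (simp add: partition_on_def)
  then have "L \<inter> L' = {}" using a by (simp add: disjointD)
  then show False using a by blast
qed

lemma parts_finite: "L \<in> P \<Longrightarrow> finite L"
  using parts_sub words_finite finite_subset by blast

lemma P_finite: "finite P"
proof -
  have "P \<subseteq> Pow W" using parts_sub by auto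
  moreover have "finite (Pow W)" using words_finite by simp
  ultimately show ?thesis by (rule finite_subset)
qed

lemma W_Union: "\<Union>P = W"
  using part by (auto simp: partition_on_def)

lemma cp_cong: "cp g \<Longrightarrow> (\<And>x. x \<in> W \<Longrightarrow> g x = h x) \<Longrightarrow> cp h"
  unfolding cp_def
proof (intro ballI)
  fix L x y assume g: "\<forall>L\<in>P. \<forall>x\<in>L. \<forall>y\<in>L. g x = g y" and e: "\<And>x. x \<in> W \<Longrightarrow> g x = h x"
    and L: "L \<in> P" and x: "x \<in> L" and y: "y \<in> L"
  have "x \<in> W" "y \<in> W" using parts_sub[OF L] x y by auto
  then have "h x = g x" "h y = g y" using e by auto
  moreover have "g x = g y" using g L x y by blast
  ultimately show "h x = h y" by simp
qed

lemma cp_sum: "finite J \<Longrightarrow> (\<And>j. j \<in> J \<Longrightarrow> cp (h j)) \<Longrightarrow> cp (\<lambda>x. \<Sum>j\<in>J. h j x)"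
  unfolding cp_def
proof (intro ballI)
  fix L x y assume hj: "\<And>j. j \<in> J \<Longrightarrow> \<forall>L\<in>P. \<forall>x\<in>L. \<forall>y\<in>L. h j x = h j y"
    and L: "L \<in> P" and x: "x \<in> L" and y: "y \<in> L"
  show "(\<Sum>j\<in>J. h j x) = (\<Sum>j\<in>J. h j y)"
  proof (rule sum.cong[OF refl])
    fix j assume "j \<in> J"
    then show "h j x = h j y" using hj L x y by blast
  qed
qed

lemma cp_lin: "cp g \<Longrightarrow> cp h \<Longrightarrow> cp (\<lambda>x. a * g x + b * h x)"
  unfolding cp_def
proof (intro ballI)
  fix L x y assume g: "\<forall>L\<in>P. \<forall>x\<in>L. \<forall>y\<in>L. g x = g y" and h: "\<forall>L\<in>P. \<forall>x\<in>L. \<forall>y\<in>L. h x = h y"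
    and L: "L \<in> P" and x: "x \<in> L" and y: "y \<in> L"
  have "g x = g y" "h x = h y" using g h L x y by blast+
  then show "a * g x + b * h x = a * g y + b * h y" by simp
qed

lemma cp_scale: "cp g \<Longrightarrow> cp (\<lambda>x. a * g x)"
  using cp_lin[of g g a 0] by simp

lemma Pop_cp:
  assumes g: "cp g"
  shows "cp (Pop g)"
  unfolding cp_def
proof (intro ballI)
  fix L0 x x' assume L0: "L0 \<in> P" and x: "x \<in> L0" and x': "x' \<in> L0"
  define c where "c L = g (SOME y. y \<in> L)" for L
  have c: "g y = c L" if "L \<in> P" "y \<in> L" for L y
  proof -
    have "(SOME y. y \<in> L) \<in> L" using that(2) by (rule someI)
    then show ?thesis using g that unfolding c_def cp_def by blast
  qed
  have dis: "\<forall>A\<in>P. \<forall>B\<in>P. A \<noteq> B \<longrightarrow> A \<inter> B = {}"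
    using part_unique by blast
  have fin: "\<forall>A\<in>P. finite A" using parts_finite by blast
  have split: "Pop g z = (\<Sum>L\<in>P. c L * (\<Sum>y\<in>L. insect_p q n z y))" for z
  proof -
    have "Pop g z = (\<Sum>L\<in>P. \<Sum>y\<in>L. insect_p q n z y * g y)"
      unfolding Pop_def W_Union[symmetric] using sum.Union_disjoint[OF fin dis] by simp
    also have "\<dots> = (\<Sum>L\<in>P. c L * (\<Sum>y\<in>L. insect_p q n z y))"
      by (intro sum.cong refl) (simp add: c sum_distrib_left mult.commute)
    finally show ?thesis .
  qed
  have "(\<Sum>y\<in>L. insect_p q n x y) = (\<Sum>y\<in>L. insect_p q n x' y)" if "L \<in> P" for L
    using lump L0 x x' that unfolding lumpable_def by blast
  then show "Pop g x = Pop g x'" unfolding split by (intro sum.cong refl) simp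
qed

lemma Pop_lin: "Pop (\<lambda>y. \<Sum>j\<in>J. c j * h j y) x = (\<Sum>j\<in>J. c j * Pop (h j) x)"
  unfolding Pop_def sum_distrib_left sum_distrib_right
  by (subst sum.swap) (simp add: mult.left_commute mult.assoc)

definition Fr :: "(nat list \<Rightarrow> real) \<Rightarrow> nat \<Rightarrow> nat list \<Rightarrow> real" where
  "Fr f r x = (\<Sum>m\<le>n. lam m ^ r * wv f m x)"

lemma Fr_cp: "cp f \<Longrightarrow> cp (Fr f r)"
proof (induction r)
  case 0
  show ?case by (rule cp_cong[OF 0]) (simp add: Fr_def sum_wv_n)
next
  case (Suc r)
  have "cp (Pop (Fr f r))" by (rule Pop_cp[OF Suc.IH[OF Suc.prems]])
  then show ?case
  proof (rule cp_cong)
    fix x assume x: "x \<in> W"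
    have "Pop (Fr f r) x = (\<Sum>m\<le>n. lam m ^ r * Pop (wv f m) x)"
      unfolding Fr_def[abs_def] by (rule Pop_lin)
    also have "\<dots> = Fr f (Suc r) x"
      unfolding Fr_def by (intro sum.cong refl) (simp add: Pop_wv[OF x])
    finally show "Pop (Fr f r) x = Fr f (Suc r) x" .
  qed
qed

lemma vdm:
  assumes "finite J" and "inj_on l J"
    and "\<And>r. cp (\<lambda>x. \<Sum>j\<in>J. l j ^ r * w j x)"
  shows "\<forall>j\<in>J. cp (w j)"
  using assms
proof (induction J arbitrary: w rule: finite_induct)
  case empty
  then show ?case by simp
next
  case (insert j0 J)
  let ?F = "\<lambda>r x. \<Sum>j\<in>insert j0 J. l j ^ r * w j x"
  define w' where "w' j x = (l j - l j0) * w j x" for j x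
  have inj: "inj_on l J" using insert.prems(1) by (simp add: inj_on_insert)
  have "cp (\<lambda>x. \<Sum>j\<in>J. l j ^ r * w' j x)" for r
  proof -
    have "cp (\<lambda>x. 1 * ?F (Suc r) x + (- l j0) * ?F r x)"
      by (rule cp_lin) (rule insert.prems(2))+
    then show ?thesis
    proof (rule cp_cong)
      fix x
      have "1 * ?F (Suc r) x + (- l j0) * ?F r x = (\<Sum>j\<in>insert j0 J. l j ^ r * w' j x)"
        unfolding w'_def by (simp add: sum_distrib_left algebra_simps sum.distrib[symmetric] sum_subtractf[symmetric])
      also have "\<dots> = (\<Sum>j\<in>J. l j ^ r * w' j x)"
        using insert.hyps by (simp add: w'_def)
      finally show "1 * ?F (Suc r) x + (- l j0) * ?F r x = (\<Sum>j\<in>J. l j ^ r * w' j x)" .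
    qed
  qed
  then have w': "\<forall>j\<in>J. cp (w' j)" using insert.IH[OF inj] by blast
  have wJ: "cp (w j)" if j: "j \<in> J" for j
  proof -
    have ne: "l j \<noteq> l j0" using insert.prems(1) insert.hyps j by (auto simp: inj_on_def)
    have "cp (\<lambda>x. (1 / (l j - l j0)) * w' j x)" using w' j by (intro cp_scale) auto
    then show ?thesis by (rule cp_cong) (use ne in \<open>simp add: w'_def\<close>)
  qed
  have "cp (\<lambda>x. 1 * ?F 0 x + (-1) * (\<Sum>j\<in>J. w j x))"
    by (rule cp_lin[OF insert.prems(2)[of 0] cp_sum[OF insert.hyps(1) wJ]])
  then have "cp (w j0)" by (rule cp_cong) (use insert.hyps in simp)
  then show ?case using wJ by auto
qed

lemma lam_inj: "inj_on lam {..n}"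
proof -
  have "lam m' < lam m" if "m < m'" "m' \<le> n" for m m'
  proof -
    have "lam m = (\<Sum>k\<in>{m..<m'}. bb k) + lam m'"
      unfolding lam_def using that by (simp add: sum.atLeastLessThan_concat)
    moreover have "(\<Sum>k\<in>{m..<m'}. bb k) > 0"
      by (rule sum_pos) (use that bb_pos in auto)
    ultimately show ?thesis by simp
  qed
  then show ?thesis unfolding inj_on_def
  proof (intro ballI impI)
    fix m m' assume lt: "\<And>m m'. m < m' \<Longrightarrow> m' \<le> n \<Longrightarrow> lam m' < lam m"
      and m: "m \<in> {..n}" and m': "m' \<in> {..n}" and e: "lam m = lam m'"
    show "m = m'"
    proof (rule ccontr)
      assume "m \<noteq> m'"
      then consider "m < m'" | "m' < m" by linarith
      then show False
      proof cases
        case 1 then show False using lt[of m m'] m' e by simp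
      next
        case 2 then show False using lt[of m' m] m e by simp
      qed
    qed
  qed
qed

lemma cp_E: "cp f \<Longrightarrow> k \<le> n \<Longrightarrow> cp (Eop k f)"
proof -
  assume f: "cp f" and k: "k \<le> n"
  have "\<forall>m\<in>{..n}. cp (wv f m)"
  proof (rule vdm[OF _ lam_inj])
    fix r
    have "Fr f r = (\<lambda>x. \<Sum>m\<in>{..n}. lam m ^ r * wv f m x)" by (rule ext) (simp add: Fr_def)
    then show "cp (\<lambda>x. \<Sum>m\<in>{..n}. lam m ^ r * wv f m x)" using Fr_cp[OF f, of r] by simp
  qed simp
  then have "cp (\<lambda>x. \<Sum>m\<le>k. wv f m x)" using k by (intro cp_sum) auto
  then show ?thesis by (rule cp_cong) (simp add: sum_wv k)
qed

lemma count_const: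
  assumes L: "L \<in> P" and L': "L' \<in> P" and x: "x \<in> L" and x': "x' \<in> L" and k: "k \<le> n"
  shows "card {y \<in> L'. take k y = take k x} = card {y \<in> L'. take k y = take k x'}"
proof -
  define f where "f y = (if y \<in> L' then 1 else 0 :: real)" for y
  have "cp f" unfolding cp_def
  proof (intro ballI)
    fix L0 a b assume L0: "L0 \<in> P" and a: "a \<in> L0" and b: "b \<in> L0"
    have "a \<in> L' \<longleftrightarrow> b \<in> L'"
    proof
      assume "a \<in> L'" then have "L0 = L'" using part_unique[OF L0 L' a] by blast
      then show "b \<in> L'" using b by simp
    next
      assume "b \<in> L'" then have "L0 = L'" using part_unique[OF L0 L' b] by blast
      then show "a \<in> L'" using a by simp
    qed
    then show "f a = f b" unfolding f_def by simp
  qed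
  then have c: "cp (Eop k f)" using cp_E k by blast
  have e: "Eop k f z = real (card {y \<in> L'. take k y = take k z}) / real q ^ (n - k)" for z
  proof -
    have "(\<Sum>y\<in>blk k z. f y) = real (card (blk k z \<inter> L'))"
      unfolding f_def by (simp add: sum.If_cases blk_finite)
    moreover have "blk k z \<inter> L' = {y \<in> L'. take k y = take k z}"
      using parts_sub[OF L'] by (auto simp: blk_def)
    ultimately show ?thesis by (simp add: Eop_def)
  qed
  have "Eop k f x = Eop k f x'" using c L x x' unfolding cp_def by blast
  then show ?thesis unfolding e using qpos[of "n-k"] by simp
qed

end

lemma match_bij:
  fixes f :: "'a \<Rightarrow> 'c" and g :: "'b \<Rightarrow> 'c"
  assumes A: "finite A" and B: "finite B"
    and cards: "\<And>c. card {a\<in>A. f a = c} = card {b\<in>B. g b = c}"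
    and a0: "a0 \<in> A" and b0: "b0 \<in> B" and fg: "f a0 = g b0"
  shows "\<exists>\<sigma>. bij_betw \<sigma> A B \<and> (\<forall>a\<in>A. g (\<sigma> a) = f a) \<and> \<sigma> a0 = b0"
proof -
  define FA where "FA c = {a\<in>A. f a = c} - {a0}" for c
  define FB where "FB c = {b\<in>B. g b = c} - {b0}" for c
  have "\<exists>t. bij_betw t (FA c) (FB c)" for c
  proof (rule finite_same_card_bij)
    show "finite (FA c)" "finite (FB c)" using A B by (auto simp: FA_def FB_def)
    show "card (FA c) = card (FB c)"
    proof (cases "c = f a0")
      case True
      then have "a0 \<in> {a\<in>A. f a = c}" "b0 \<in> {b\<in>B. g b = c}" using a0 b0 fg by auto
      then show ?thesis unfolding FA_def FB_def using cards[of c] A B by (simp add: card_Diff_singleton)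
    next
      case False
      then have "a0 \<notin> {a\<in>A. f a = c}" "b0 \<notin> {b\<in>B. g b = c}" using fg by auto
      then show ?thesis unfolding FA_def FB_def using cards[of c] by simp
    qed
  qed
  then obtain t where t: "\<And>c. bij_betw (t c) (FA c) (FB c)" by metis
  define s where "s a = (if a = a0 then b0 else t (f a) a)" for a
  have map: "s a \<in> B \<and> g (s a) = f a \<and> (a \<noteq> a0 \<longrightarrow> s a \<noteq> b0)" if a: "a \<in> A" for a
  proof (cases "a = a0")
    case True then show ?thesis using b0 fg by (simp add: s_def)
  next
    case False
    then have "a \<in> FA (f a)" using a by (simp add: FA_def)
    then have "t (f a) a \<in> FB (f a)" using t[of "f a"] by (meson bij_betwE)
    then show ?thesis using False by (simp add: s_def FB_def)
  qed
  have inj: "inj_on s A"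
  proof (rule inj_onI)
    fix a a' assume a: "a \<in> A" and a': "a' \<in> A" and e: "s a = s a'"
    show "a = a'"
    proof (cases "a = a0 \<or> a' = a0")
      case True
      have s0: "s a0 = b0" by (simp add: s_def)
      show ?thesis
      proof (rule ccontr)
        assume ne: "a \<noteq> a'"
        show False
        proof (cases "a = a0")
          case T: True
          then have "a' \<noteq> a0" using ne by simp
          then have "s a' \<noteq> b0" using map[OF a'] by blast
          moreover have "s a' = b0" using e s0 T by simp
          ultimately show False by blast
        next
          case F: False
          then have "a' = a0" using True by blast
          have "s a \<noteq> b0" using map[OF a] F by blast
          moreover have "s a = b0" using e s0 \<open>a' = a0\<close> by simp
          ultimately show False by blast
        qed
      qed
    next
      case False
      have "f a = f a'" using map[OF a] map[OF a'] e by metis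
      moreover have "a \<in> FA (f a)" "a' \<in> FA (f a)" using a a' False \<open>f a = f a'\<close> by (auto simp: FA_def)
      moreover have "t (f a) a = t (f a) a'" using e False \<open>f a = f a'\<close> by (simp add: s_def)
      ultimately show ?thesis using t[of "f a"] by (meson bij_betw_def inj_onD)
    qed
  qed
  have surj: "s ` A = B"
  proof
    show "s ` A \<subseteq> B" using map by blast
    show "B \<subseteq> s ` A"
    proof
      fix b assume b: "b \<in> B"
      show "b \<in> s ` A"
      proof (cases "b = b0")
        case True then show ?thesis using a0 by (force simp: s_def)
      next
        case False
        then have "b \<in> FB (g b)" using b by (simp add: FB_def)
        then obtain a where a: "a \<in> FA (g b)" "t (g b) a = b"
          using t[of "g b"] by (metis bij_betw_def imageE)
        then have "a \<in> A" "f a = g b" "a \<noteq> a0" by (auto simp: FA_def)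
        then have "s a = b" using a by (simp add: s_def)
        then show ?thesis using \<open>a \<in> A\<close> by blast
      qed
    qed
  qed
  show ?thesis
    by (rule exI[of _ s]) (use inj surj map in \<open>auto simp: bij_betw_def s_def\<close>)
qed

context insect begin

definition cnt :: "nat list \<Rightarrow> nat list set \<Rightarrow> nat" where
  "cnt u L = card {y \<in> L. take (length u) y = u}"

lemma cnt_take:
  assumes L0: "L0 \<in> P" and y: "y \<in> L0" and y': "y' \<in> L0" and k: "k \<le> n" and L: "L \<in> P"
  shows "cnt (take k y) L = cnt (take k y') L"
proof -
  have "y \<in> W" "y' \<in> W" using parts_sub[OF L0] y y' by auto
  then have "length (take k y) = k" "length (take k y') = k" using k by (auto simp: words_def)
  then show ?thesis unfolding cnt_def using count_const[OF L0 L y y' k] by simp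
qed

lemma in_words_nth: "y \<in> W \<Longrightarrow> m < n \<Longrightarrow> y ! m < q"
proof -
  assume y: "y \<in> W" and m: "m < n"
  then have "y ! m \<in> set y" by (simp add: words_def)
  then show ?thesis using y by (auto simp: words_def)
qed

lemma take_Suc_W: "y \<in> W \<Longrightarrow> m < n \<Longrightarrow> take (Suc m) y = take m y @ [y ! m]"
  by (simp add: take_Suc_conv_app_nth words_def)

lemma cnt_expand:
  assumes w: "length w = m" and m: "m < n" and L: "L \<in> P"
  shows "cnt w L = (\<Sum>b\<in>{0..<q}. cnt (w @ [b]) L)"
proof -
  define A where "A b = {y \<in> L. take (Suc m) y = w @ [b]}" for b
  have LW: "L \<subseteq> W" by (rule parts_sub[OF L])
  have "{y \<in> L. take m y = w} = (\<Union>b\<in>{0..<q}. A b)"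
  proof (intro equalityI subsetI)
    fix y assume "y \<in> {y \<in> L. take m y = w}"
    then have y: "y \<in> L" "take m y = w" by auto
    then have yW: "y \<in> W" using LW by auto
    then have "y ! m < q" "take (Suc m) y = w @ [y ! m]"
      using in_words_nth take_Suc_W m y(2) by auto
    then show "y \<in> (\<Union>b\<in>{0..<q}. A b)" using y(1) by (auto simp: A_def)
  next
    fix y assume "y \<in> (\<Union>b\<in>{0..<q}. A b)"
    then obtain b where "y \<in> L" "take (Suc m) y = w @ [b]" by (auto simp: A_def)
    then have "take m y = w" using w by (metis append_take_drop_id butlast_snoc butlast_take diff_Suc_1 take_eq_mono le_add2 plus_1_eq_Suc take_take min.absorb1 length_append_singleton nat_le_linear)
    then show "y \<in> {y \<in> L. take m y = w}" using \<open>y \<in> L\<close> by simp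
  qed
  moreover have "card (\<Union>b\<in>{0..<q}. A b) = (\<Sum>b\<in>{0..<q}. card (A b))"
    by (rule card_UN_disjoint) (auto simp: A_def parts_finite[OF L])
  ultimately show ?thesis unfolding cnt_def A_def using w by simp
qed

end

context insect begin

definition key :: "nat list \<Rightarrow> nat \<Rightarrow> nat list set \<Rightarrow> nat" where
  "key w b = (\<lambda>L. if L \<in> P then cnt (w @ [b]) L else 0)"

definition Wp :: "nat list \<Rightarrow> nat list set" where
  "Wp u = {y \<in> W. take (length u) y = u}"

lemma Wp_ne:
  assumes z: "z \<in> words q k" and k: "k \<le> n"
  shows "z @ replicate (n - k) 0 \<in> Wp z"
  using z k q2 by (auto simp: Wp_def words_def)

lemma cnt_pos_ex: "cnt z L > 0 \<Longrightarrow> \<exists>y\<in>L. take (length z) y = z"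
  unfolding cnt_def by (metis (mono_tags, lifting) card.empty empty_Collect_eq less_irrefl)

lemma ex_cnt_pos:
  assumes z: "z \<in> words q k" and k: "k \<le> n"
  shows "\<exists>L\<in>P. cnt z L > 0"
proof -
  let ?y = "z @ replicate (n - k) 0"
  have y: "?y \<in> W" "take (length z) ?y = z" using Wp_ne[OF z k] by (auto simp: Wp_def)
  then obtain L where L: "L \<in> P" "?y \<in> L" using W_Union by blast
  have "?y \<in> {y \<in> L. take (length z) y = z}" using L y by simp
  moreover have "finite {y \<in> L. take (length z) y = z}" using parts_finite[OF L(1)] by simp
  ultimately have "card {y \<in> L. take (length z) y = z} > 0" by (auto simp: card_gt_0_iff)
  then show ?thesis using L by (auto simp: cnt_def)
qed

lemma key_eq:
  assumes L: "L \<in> P" and y: "y \<in> L" and y': "y' \<in> L" and m: "m < n"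
    and t: "take (Suc m) y = w @ [b]" and t': "take (Suc m) y' = w' @ [b']"
  shows "key w b = key w' b'"
proof
  fix L'
  show "key w b L' = key w' b' L'"
  proof (cases "L' \<in> P")
    case True
    have "cnt (take (Suc m) y) L' = cnt (take (Suc m) y') L'"
      using cnt_take[OF L y y' _ True] m by simp
    then show ?thesis using True t t' by (simp add: key_def)
  next
    case False then show ?thesis by (simp add: key_def)
  qed
qed

lemma fiber_sum:
  assumes w: "length w = m" and m: "m < n" and u: "length u = m" and a0: "a0 < q"
  shows "(\<Sum>L\<in>{L\<in>P. key u a0 L > 0}. cnt w L) =
         card {b\<in>{0..<q}. key w b = key u a0} * (\<Sum>L\<in>{L\<in>P. key u a0 L > 0}. key u a0 L)"
proof -
  let ?c = "key u a0"
  let ?S = "{L\<in>P. ?c L > 0}"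
  let ?T = "\<Sum>L\<in>?S. ?c L"
  have finS: "finite ?S" using P_finite by simp
  have "(\<Sum>L\<in>?S. cnt w L) = (\<Sum>L\<in>?S. \<Sum>b\<in>{0..<q}. cnt (w @ [b]) L)"
    by (rule sum.cong[OF refl]) (use cnt_expand[OF w m] in blast)
  also have "\<dots> = (\<Sum>b\<in>{0..<q}. \<Sum>L\<in>?S. cnt (w @ [b]) L)" by (rule sum.swap)
  also have "\<dots> = (\<Sum>b\<in>{0..<q}. if key w b = ?c then ?T else 0)"
  proof (rule sum.cong[OF refl])
    fix b assume b: "b \<in> {0..<q}"
    show "(\<Sum>L\<in>?S. cnt (w @ [b]) L) = (if key w b = ?c then ?T else 0)"
    proof (cases "key w b = ?c")
      case True
      have "(\<Sum>L\<in>?S. cnt (w @ [b]) L) = ?T"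
      proof (rule sum.cong[OF refl])
        fix L assume "L \<in> ?S"
        then have "L \<in> P" by simp
        then show "cnt (w @ [b]) L = ?c L" using True[symmetric] fun_cong[OF True, of L]
          by (simp add: key_def)
      qed
      then show ?thesis using True by simp
    next
      case False
      have "(\<Sum>L\<in>?S. cnt (w @ [b]) L) = 0"
      proof (rule sum.neutral, rule ballI)
        fix L assume LS: "L \<in> ?S"
        then have L: "L \<in> P" and cL: "?c L > 0" by auto
        show "cnt (w @ [b]) L = 0"
        proof (rule ccontr)
          assume "cnt (w @ [b]) L \<noteq> 0"
          then obtain y where y: "y \<in> L" "take (Suc m) y = w @ [b]"
            using cnt_pos_ex[of "w @ [b]" L] w by auto
          have "cnt (u @ [a0]) L > 0" using cL L by (simp add: key_def)
          then obtain y0 where y0: "y0 \<in> L" "take (Suc m) y0 = u @ [a0]"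
            using cnt_pos_ex[of "u @ [a0]" L] u by auto
          have "key w b = key u a0" by (rule key_eq[OF L y(1) y0(1) m y(2) y0(2)])
          then show False using False by simp
        qed
      qed
      then show ?thesis using False by simp
    qed
  qed
  also have "\<dots> = (\<Sum>b\<in>{b\<in>{0..<q}. key w b = ?c}. ?T)"
    by (rule sum.inter_filter[symmetric]) simp
  also have "\<dots> = card {b\<in>{0..<q}. key w b = ?c} * ?T" by simp
  finally show ?thesis .
qed

lemma fiber_card1:
  assumes u: "u \<in> words q m" and v: "length v = m" and m: "m < n"
    and cuv: "\<forall>L\<in>P. cnt u L = cnt v L" and a0: "a0 < q"
  shows "card {a\<in>{0..<q}. key u a = key u a0} = card {b\<in>{0..<q}. key v b = key u a0}"
proof -
  let ?c = "key u a0"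
  let ?S = "{L\<in>P. ?c L > 0}"
  let ?T = "\<Sum>L\<in>?S. ?c L"
  have lu: "length u = m" using u by (simp add: words_def)
  have "u @ [a0] \<in> words q (Suc m)" using u a0 by (simp add: words_def)
  then obtain L1 where L1: "L1 \<in> P" "cnt (u @ [a0]) L1 > 0" using ex_cnt_pos m by fastforce
  have "?c L1 > 0" using L1 by (simp add: key_def)
  then have "?c L1 \<le> ?T" using L1 P_finite by (intro member_le_sum) auto
  then have Tpos: "?T > 0" using \<open>?c L1 > 0\<close> by linarith
  have "(\<Sum>L\<in>?S. cnt u L) = (\<Sum>L\<in>?S. cnt v L)" using cuv by (intro sum.cong) auto
  then have "card {a\<in>{0..<q}. key u a = ?c} * ?T = card {b\<in>{0..<q}. key v b = ?c} * ?T"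
    using fiber_sum[OF lu m lu a0] fiber_sum[OF v m lu a0] by simp
  then show ?thesis using Tpos by simp
qed

lemma fiber_card:
  assumes u: "u \<in> words q m" and v: "v \<in> words q m" and m: "m < n"
    and cuv: "\<forall>L\<in>P. cnt u L = cnt v L"
  shows "card {a\<in>{0..<q}. key u a = c} = card {b\<in>{0..<q}. key v b = c}"
proof (cases "\<exists>a0<q. key u a0 = c")
  case True
  then obtain a0 where "a0 < q" "key u a0 = c" by blast
  then show ?thesis using fiber_card1[OF u _ m cuv, of a0] v by (simp add: words_def)
next
  case F1: False
  show ?thesis
  proof (cases "\<exists>b0<q. key v b0 = c")
    case True
    then obtain b0 where "b0 < q" "key v b0 = c" by blast
    then show ?thesis using fiber_card1[OF v _ m _, of u b0] u cuv by (simp add: words_def)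
  next
    case False
    have "{a\<in>{0..<q}. key u a = c} = {}" using F1 by auto
    moreover have "{b\<in>{0..<q}. key v b = c} = {}" using False by auto
    ultimately show ?thesis by (simp only:)
  qed
qed

end

context insect begin

definition good :: "(nat list \<Rightarrow> nat list) \<Rightarrow> nat list \<Rightarrow> nat list \<Rightarrow> bool" where
  "good h u v \<longleftrightarrow> bij_betw h (Wp u) (Wp v) \<and> (\<forall>y\<in>Wp u. \<forall>L\<in>P. y \<in> L \<longleftrightarrow> h y \<in> L) \<and>
     (\<forall>y\<in>Wp u. \<forall>z\<in>Wp u. \<forall>j\<le>n. take j y = take j z \<longleftrightarrow> take j (h y) = take j (h z))"

lemma Wp_child:
  assumes w: "length w = m" and m: "m < n" and z: "z \<in> Wp (w @ [b])"
  shows "z \<in> Wp w \<and> z ! m = b"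
proof -
  have zW: "z \<in> W" and t: "take (Suc m) z = w @ [b]" using z w by (auto simp: Wp_def)
  have "take (Suc m) z = take m z @ [z ! m]" by (rule take_Suc_W[OF zW m])
  then have "take m z = w" "z ! m = b" using t w by auto
  then show ?thesis using zW w by (simp add: Wp_def)
qed

lemma Wp_parent:
  assumes w: "length w = m" and m: "m < n" and z: "z \<in> Wp w"
  shows "z ! m < q \<and> z \<in> Wp (w @ [z ! m])"
proof -
  have zW: "z \<in> W" and t: "take m z = w" using z w by (auto simp: Wp_def)
  have "take (Suc m) z = take m z @ [z ! m]" by (rule take_Suc_W[OF zW m])
  then show ?thesis using zW t w in_words_nth[OF zW m] by (simp add: Wp_def)
qed

lemma Wp_take: "z \<in> Wp w \<Longrightarrow> j \<le> length w \<Longrightarrow> take j z = take j w"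
proof -
  assume z: "z \<in> Wp w" and j: "j \<le> length w"
  have "take j (take (length w) z) = take j w" using z by (simp add: Wp_def)
  then show ?thesis using j by (simp add: min.absorb1)
qed

lemma Wp_full: "z \<in> words q n \<Longrightarrow> Wp z = {z}"
  by (auto simp: Wp_def words_def)

lemma iso:
  assumes "k \<le> n" and "u \<in> words q (n - k)" and "v \<in> words q (n - k)"
    and "\<forall>L\<in>P. cnt u L = cnt v L" and "x \<in> Wp u" and "x' \<in> Wp v"
    and "L0 \<in> P" and "x \<in> L0" and "x' \<in> L0"
  shows "\<exists>h. good h u v \<and> h x = x'"
  using assms
proof (induction k arbitrary: u v x x' L0)
  case 0
  then have u: "u \<in> W" and v: "v \<in> W" by auto
  have xu: "x = u" using 0 Wp_full[OF u] by auto
  have xv: "x' = v" using 0 Wp_full[OF v] by auto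
  have part: "\<forall>L\<in>P. x \<in> L \<longleftrightarrow> x' \<in> L"
  proof
    fix L assume L: "L \<in> P"
    show "x \<in> L \<longleftrightarrow> x' \<in> L"
    proof
      assume "x \<in> L" then have "L = L0" using part_unique[OF L 0(7)] 0(8) by blast
      then show "x' \<in> L" using 0(9) by simp
    next
      assume "x' \<in> L" then have "L = L0" using part_unique[OF L 0(7)] 0(9) by blast
      then show "x \<in> L" using 0(8) by simp
    qed
  qed
  have "good (\<lambda>_. v) u v"
    unfolding good_def Wp_full[OF u] Wp_full[OF v] using part xu xv by (simp add: bij_betw_def)
  then show ?case using xv by blast
next
  case (Suc k)
  define m where "m = n - Suc k"
  have m: "m < n" and Sm: "Suc m = n - k" and kn: "k \<le> n" using Suc.prems(1) by (auto simp: m_def)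
  have u: "u \<in> words q m" and v: "v \<in> words q m" using Suc.prems m_def by auto
  have lu: "length u = m" and lv: "length v = m" using u v by (auto simp: words_def)
  have cuv: "\<forall>L\<in>P. cnt u L = cnt v L" using Suc.prems(4) .
  have x: "x \<in> Wp u" and x': "x' \<in> Wp v" using Suc.prems by auto
  have L0: "L0 \<in> P" "x \<in> L0" "x' \<in> L0" using Suc.prems by auto
  have xp: "x ! m < q" "x \<in> Wp (u @ [x ! m])" using Wp_parent[OF lu m x] by auto
  have xp': "x' ! m < q" "x' \<in> Wp (v @ [x' ! m])" using Wp_parent[OF lv m x'] by auto
  have tx: "take (Suc m) x = u @ [x ! m]" using xp(2) lu by (simp add: Wp_def)
  have tx': "take (Suc m) x' = v @ [x' ! m]" using xp'(2) lv by (simp add: Wp_def)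
  have kx: "key u (x ! m) = key v (x' ! m)" by (rule key_eq[OF L0 m tx tx'])
  obtain \<sigma> where \<sigma>: "bij_betw \<sigma> {0..<q} {0..<q}" "\<forall>a\<in>{0..<q}. key v (\<sigma> a) = key u a"
      "\<sigma> (x ! m) = x' ! m"
    using match_bij[of "{0..<q}" "{0..<q}" "key u" "key v" "x ! m" "x' ! m"]
      fiber_card[OF u v m cuv] xp(1) xp'(1) kx by auto
  have \<sigma>q: "\<sigma> a < q" if "a < q" for a using \<sigma>(1) that by (auto simp: bij_betw_def)
  have "\<exists>h. good h (u @ [a]) (v @ [\<sigma> a]) \<and> (a = x ! m \<longrightarrow> h x = x')" if a: "a \<in> {0..<q}" for a
  proof -
    have ua: "u @ [a] \<in> words q (n - k)" using u a Sm by (auto simp: words_def)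
    have va: "v @ [\<sigma> a] \<in> words q (n - k)" using v \<sigma>q a Sm by (auto simp: words_def)
    have ck: "\<forall>L\<in>P. cnt (u @ [a]) L = cnt (v @ [\<sigma> a]) L"
    proof
      fix L assume L: "L \<in> P"
      have "key v (\<sigma> a) L = key u a L" using \<sigma>(2) a by simp
      then show "cnt (u @ [a]) L = cnt (v @ [\<sigma> a]) L" using L by (simp add: key_def)
    qed
    show ?thesis
    proof (cases "a = x ! m")
      case True
      have "\<exists>h. good h (u @ [a]) (v @ [\<sigma> a]) \<and> h x = x'"
        by (rule Suc.IH[OF kn ua va ck _ _ L0]) (use xp xp' True \<sigma>(3) in auto)
      then show ?thesis by blast
    next
      case False
      have "u @ [a] \<in> words q (Suc m)" using u a by (auto simp: words_def)
      then obtain L1 where L1: "L1 \<in> P" "cnt (u @ [a]) L1 > 0" using ex_cnt_pos m by fastforce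
      obtain y where y: "y \<in> L1" "take (length (u @ [a])) y = u @ [a]"
        using cnt_pos_ex[OF L1(2)] by blast
      have "cnt (v @ [\<sigma> a]) L1 > 0" using L1 ck by simp
      then obtain y' where y': "y' \<in> L1" "take (length (v @ [\<sigma> a])) y' = v @ [\<sigma> a]"
        using cnt_pos_ex by blast
      have yW: "y \<in> W" "y' \<in> W" using y(1) y'(1) parts_sub[OF L1(1)] by auto
      have "\<exists>h. good h (u @ [a]) (v @ [\<sigma> a]) \<and> h y = y'"
        by (rule Suc.IH[OF kn ua va ck _ _ L1(1) y(1) y'(1)]) (use y y' yW in \<open>auto simp: Wp_def\<close>)
      then show ?thesis using False by blast
    qed
  qed
  then have "\<forall>a\<in>{0..<q}. \<exists>h. good h (u @ [a]) (v @ [\<sigma> a]) \<and> (a = x ! m \<longrightarrow> h x = x')"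
    by blast
  from bchoice[OF this] obtain H where
    H: "\<forall>a\<in>{0..<q}. good (H a) (u @ [a]) (v @ [\<sigma> a]) \<and> (a = x ! m \<longrightarrow> H a x = x')"
    by blast
  define h where "h y = H (y ! m) y" for y
  have Hg: "good (H a) (u @ [a]) (v @ [\<sigma> a])" if "a < q" for a using H that by auto
  have hmap: "h y \<in> Wp (v @ [\<sigma> (y ! m)])" if y: "y \<in> Wp u" for y
  proof -
    have "y ! m < q" "y \<in> Wp (u @ [y ! m])" using Wp_parent[OF lu m y] by auto
    moreover have "bij_betw (H (y ! m)) (Wp (u @ [y ! m])) (Wp (v @ [\<sigma> (y ! m)]))"
      using Hg[of "y ! m"] \<open>y ! m < q\<close> by (simp add: good_def)
    ultimately show ?thesis unfolding h_def by (meson bij_betwE)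
  qed
  have hv: "h y \<in> Wp v \<and> h y ! m = \<sigma> (y ! m)" if y: "y \<in> Wp u" for y
    using Wp_child[OF lv m hmap[OF y]] .
  have inj\<sigma>: "inj_on \<sigma> {0..<q}" using \<sigma>(1) by (simp add: bij_betw_def)
  have inj: "inj_on h (Wp u)"
  proof (rule inj_onI)
    fix y z assume y: "y \<in> Wp u" and z: "z \<in> Wp u" and e: "h y = h z"
    have yp: "y ! m < q" "y \<in> Wp (u @ [y ! m])" using Wp_parent[OF lu m y] by auto
    have zp: "z ! m < q" "z \<in> Wp (u @ [z ! m])" using Wp_parent[OF lu m z] by auto
    have "\<sigma> (y ! m) = \<sigma> (z ! m)" using hv[OF y] hv[OF z] e by simp
    then have eq: "y ! m = z ! m" using inj\<sigma> yp(1) zp(1) by (auto dest: inj_onD)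
    have "inj_on (H (y ! m)) (Wp (u @ [y ! m]))"
      using Hg[OF yp(1)] by (simp add: good_def bij_betw_def)
    moreover have "H (y ! m) y = H (y ! m) z" using e eq by (simp add: h_def)
    ultimately show "y = z" using yp(2) zp(2) eq by (auto dest: inj_onD)
  qed
  have img: "h ` Wp u = Wp v"
  proof
    show "h ` Wp u \<subseteq> Wp v" using hv by blast
    show "Wp v \<subseteq> h ` Wp u"
    proof
      fix w assume w: "w \<in> Wp v"
      have wp: "w ! m < q" "w \<in> Wp (v @ [w ! m])" using Wp_parent[OF lv m w] by auto
      then have "w ! m \<in> \<sigma> ` {0..<q}" using \<sigma>(1) by (simp add: bij_betw_def)
      then obtain a where a: "a < q" "\<sigma> a = w ! m" by auto
      have "H a ` Wp (u @ [a]) = Wp (v @ [\<sigma> a])" using Hg[OF a(1)] by (simp add: good_def bij_betw_def)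
      then obtain y where y: "y \<in> Wp (u @ [a])" "H a y = w" using wp(2) a(2) by force
      have "y \<in> Wp u" "y ! m = a" using Wp_child[OF lu m y(1)] by auto
      then show "w \<in> h ` Wp u" using y(2) by (auto simp: h_def)
    qed
  qed
  have partp: "\<forall>y\<in>Wp u. \<forall>L\<in>P. y \<in> L \<longleftrightarrow> h y \<in> L"
  proof (intro ballI)
    fix y L assume y: "y \<in> Wp u" and L: "L \<in> P"
    have yp: "y ! m < q" "y \<in> Wp (u @ [y ! m])" using Wp_parent[OF lu m y] by auto
    have F: "\<forall>y'\<in>Wp (u @ [y ! m]). \<forall>L\<in>P. y' \<in> L \<longleftrightarrow> H (y ! m) y' \<in> L"
      using Hg[OF yp(1)] unfolding good_def by (rule conjunct1[OF conjunct2])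
    have "y \<in> L \<longleftrightarrow> H (y ! m) y \<in> L" by (rule F[rule_format, OF yp(2) L])
    then show "y \<in> L \<longleftrightarrow> h y \<in> L" by (simp only: h_def)
  qed
  have pref: "\<forall>y\<in>Wp u. \<forall>z\<in>Wp u. \<forall>j\<le>n. take j y = take j z \<longleftrightarrow> take j (h y) = take j (h z)"
  proof (intro ballI allI impI)
    fix y z j assume y: "y \<in> Wp u" and z: "z \<in> Wp u" and j: "j \<le> n"
    have yp: "y ! m < q" "y \<in> Wp (u @ [y ! m])" using Wp_parent[OF lu m y] by auto
    have zp: "z ! m < q" "z \<in> Wp (u @ [z ! m])" using Wp_parent[OF lu m z] by auto
    show "take j y = take j z \<longleftrightarrow> take j (h y) = take j (h z)"
    proof (cases "y ! m = z ! m")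
      case True
      have F: "\<forall>y'\<in>Wp (u @ [y ! m]). \<forall>z'\<in>Wp (u @ [y ! m]). \<forall>j'\<le>n.
              take j' y' = take j' z' \<longleftrightarrow> take j' (H (y ! m) y') = take j' (H (y ! m) z')"
        using Hg[OF yp(1)] unfolding good_def by (rule conjunct2[OF conjunct2])
      have zz: "z \<in> Wp (u @ [y ! m])" using zp(2) True by simp
      have "take j y = take j z \<longleftrightarrow> take j (H (y ! m) y) = take j (H (y ! m) z)"
        by (rule F[rule_format, OF yp(2) zz j])
      then show ?thesis using True by (simp add: h_def)
    next
      case False
      show ?thesis
      proof (cases "j \<le> m")
        case True
        have "take j y = take j u" "take j z = take j u" using Wp_take[OF y] Wp_take[OF z] True lu by auto
        moreover have "take j (h y) = take j v" "take j (h z) = take j v"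
          using Wp_take[of "h y" v j] Wp_take[of "h z" v j] hv[OF y] hv[OF z] True lv by auto
        ultimately show ?thesis by simp
      next
        case jm: False
        have n1: "take j y \<noteq> take j z"
        proof
          assume "take j y = take j z"
          then have "take j y ! m = take j z ! m" by simp
          then show False using jm False by simp
        qed
        have "h y ! m \<noteq> h z ! m" using hv[OF y] hv[OF z] False inj\<sigma> yp(1) zp(1)
          by (auto dest: inj_onD)
        then have n2: "take j (h y) \<noteq> take j (h z)"
        proof (intro notI)
          assume "h y ! m \<noteq> h z ! m" and "take j (h y) = take j (h z)"
          then have "take j (h y) ! m = take j (h z) ! m" by simp
          then show False using jm \<open>h y ! m \<noteq> h z ! m\<close> by simp
        qed
        show ?thesis using n1 n2 by simp
      qed
    qed
  qed
  have "h x = x'" using H xp(1) by (simp add: h_def)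
  moreover have "good h u v" unfolding good_def bij_betw_def by (intro conjI inj img partp pref)
  ultimately show ?case by blast
qed

end

context insect begin

lemma exists_aut:
  assumes L0: "L0 \<in> P" and x: "x \<in> L0" and x': "x' \<in> L0"
  shows "\<exists>g\<in>tree_aut q n \<inter> part_aut W P. g x = x'"
proof -
  have WpW: "Wp [] = W" by (simp add: Wp_def)
  have e: "[] \<in> words q (n - n)" by (simp add: words_def)
  have xW: "x \<in> W" "x' \<in> W" using parts_sub[OF L0] x x' by auto
  obtain h where h: "good h [] []" "h x = x'"
    using iso[of n "[]" "[]" x x' L0] e xW WpW L0 x x' by auto
  have hb: "bij_betw h W W" using h(1) WpW by (simp add: good_def)
  have hp: "\<forall>y\<in>W. \<forall>L\<in>P. y \<in> L \<longleftrightarrow> h y \<in> L"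
    using h(1) WpW unfolding good_def by (metis (no_types, lifting) conjunct1 conjunct2)
  have ht: "\<forall>y\<in>W. \<forall>z\<in>W. \<forall>j\<le>n. take j y = take j z \<longleftrightarrow> take j (h y) = take j (h z)"
    using h(1) WpW unfolding good_def by (metis (no_types, lifting) conjunct2)
  define g where "g = restrict h W"
  have gb: "g \<in> Bij W"
    unfolding Bij_def g_def
    using hb bij_betw_cong[of W "restrict h W" h W] by simp
  have "g \<in> tree_aut q n"
    unfolding tree_aut_def
  proof (intro CollectI conjI ballI allI impI gb)
    fix y z j assume "y \<in> W" "z \<in> W" "j \<le> n"
    then show "take j y = take j z \<longleftrightarrow> take j (g y) = take j (g z)"
      using ht by (simp add: g_def)
  qed
  moreover have "g \<in> part_aut W P"
    unfolding part_aut_def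
  proof (intro CollectI conjI ballI allI impI gb)
    fix y L assume "y \<in> W" "L \<in> P"
    then show "y \<in> L \<longleftrightarrow> g y \<in> L" using hp by (simp add: g_def)
  qed
  moreover have "g x = x'" using h(2) xW by (simp add: g_def)
  ultimately show ?thesis by blast
qed

lemma orbit_eq:
  assumes L: "L \<in> P" and x: "x \<in> L"
  shows "{g x | g. g \<in> tree_aut q n \<inter> part_aut W P} = L"
proof
  have xW: "x \<in> W" using parts_sub[OF L] x by auto
  show "{g x | g. g \<in> tree_aut q n \<inter> part_aut W P} \<subseteq> L"
  proof
    fix y assume "y \<in> {g x | g. g \<in> tree_aut q n \<inter> part_aut W P}"
    then obtain g where g: "g \<in> part_aut W P" "y = g x" by blast
    have "x \<in> L \<longleftrightarrow> g x \<in> L" using g(1) xW L unfolding part_aut_def by blast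
    then show "y \<in> L" using x g(2) by simp
  qed
  show "L \<subseteq> {g x | g. g \<in> tree_aut q n \<inter> part_aut W P}"
  proof
    fix y assume "y \<in> L"
    then obtain g where "g \<in> tree_aut q n \<inter> part_aut W P" "g x = y"
      using exists_aut[OF L x] by blast
    then show "y \<in> {g x | g. g \<in> tree_aut q n \<inter> part_aut W P}" by blast
  qed
qed

lemma orbits_eq: "orbits (tree_aut q n \<inter> part_aut W P) W = P"
proof
  show "orbits (tree_aut q n \<inter> part_aut W P) W \<subseteq> P"
  proof
    fix Orb assume "Orb \<in> orbits (tree_aut q n \<inter> part_aut W P) W"
    then obtain x where x: "x \<in> W" "Orb = {g x | g. g \<in> tree_aut q n \<inter> part_aut W P}"
      unfolding orbits_def by blast
    then obtain L where L: "L \<in> P" "x \<in> L" using W_Union by blast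
    then show "Orb \<in> P" using orbit_eq[OF L] x(2) by simp
  qed
  show "P \<subseteq> orbits (tree_aut q n \<inter> part_aut W P) W"
  proof
    fix L assume L: "L \<in> P"
    have "L \<noteq> {}" using part L by (auto simp: partition_on_def)
    then obtain x where x: "x \<in> L" by blast
    then have "x \<in> W" using parts_sub[OF L] by auto
    moreover have "L = {g x | g. g \<in> tree_aut q n \<inter> part_aut W P}" using orbit_eq[OF L x] by simp
    ultimately show "L \<in> orbits (tree_aut q n \<inter> part_aut W P) W" unfolding orbits_def by blast
  qed
qed

end

theorem theorem15:
  fixes q n :: nat and P :: "nat list set set"
  assumes "q \<ge> 2" and "n \<ge> 1"
    and "partition_on (words q n) P"
    and "lumpable q n P"
  shows "\<exists>K. subgroup K (tree_aut_group q n) \<and> orbits K (words q n) = P"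
proof -
  interpret insect q n P using assms by (unfold_locales) auto
  show ?thesis using K_sub[of q n P] orbits_eq by blast
qed


end
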